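(* Let $A,B$ be nilpotent $n\times n$ complex matrices in Jordan normal form, and let $\xi>0$. If there exists an invertible matrix $C$ with $\|C\|,\|C^{-1}\|\le\xi$ such that $\|AC-CB\|=\varepsilon<\frac{1}{n\cdot n!\,\xi^n}$, then $A$ and $B$ have the same Jordan structure, i.e. for every $k\ge1$ they have the same number of Jordan blocks of dimension $k$.
   Context: $\|\cdot\|$ denotes the operator norm on $n\times n$ matrices. *)

theory Defs
  imports "Jordan_Normal_Form.Jordan_Normal_Form"
begin

definition vec_norm :: "complex vec \<Rightarrow> real" where
  "vec_norm v = sqrt (\<Sum>i<dim_vec v. (cmod (v $ i))^2)"

definition op_norm :: "complex mat \<Rightarrow> real" where
  "op_norm A = Sup {vec_norm (A *\<^sub>v v) | v. v \<in> carrier_vec (dim_col A) \<and> vec_norm v = 1}"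

definition nilpotent_mat :: "complex mat \<Rightarrow> bool" where
  "nilpotent_mat A \<longleftrightarrow> (\<exists>k. A ^\<^sub>m k = 0\<^sub>m (dim_row A) (dim_col A))"

definition num_blocks :: "(nat \<times> complex) list \<Rightarrow> nat \<Rightarrow> nat" where
  "num_blocks n_as k = length (filter (\<lambda>(s, a). s = k) n_as)"

end

theory Submission
  imports Defs "HOL-Analysis.L2_Norm"
begin


lemma vn_L2: "vec_norm v = L2_set (\<lambda>i. cmod (v $ i)) {..<dim_vec v}"
  unfolding vec_norm_def L2_set_def by simp

lemma vn_nonneg: "vec_norm v \<ge> 0"
  unfolding vn_L2 by simp

lemma vn_comp: "i < dim_vec v \<Longrightarrow> cmod (v $ i) \<le> vec_norm v"
  unfolding vn_L2 by (rule member_le_L2_set, auto)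

lemma vn_pos: assumes "v \<in> carrier_vec n" "v \<noteq> 0\<^sub>v n" shows "vec_norm v > 0"
proof -
  from assms obtain i where i: "i < n" "v $ i \<noteq> 0" by (metis eq_vecI carrier_vecD index_zero_vec(1,2))
  have "0 < cmod (v $ i)" using i by simp
  also have "\<dots> \<le> vec_norm v" using vn_comp[of i v] i assms by auto
  finally show ?thesis .
qed

lemma vn_smult: "vec_norm (c \<cdot>\<^sub>v v) = cmod c * vec_norm v"
  unfolding vn_L2 by (subst L2_set_right_distrib, auto simp: norm_mult intro!: L2_set_cong)

lemma vn_add: assumes "v \<in> carrier_vec n" "w \<in> carrier_vec n"
  shows "vec_norm (v + w) \<le> vec_norm v + vec_norm w"
proof -
  have "vec_norm (v + w) = L2_set (\<lambda>i. cmod (v $ i + w $ i)) {..<n}"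
    unfolding vn_L2 using assms by (intro L2_set_cong, auto)
  also have "\<dots> \<le> L2_set (\<lambda>i. cmod (v $ i) + cmod (w $ i)) {..<n}"
    by (rule L2_set_mono, auto simp: norm_triangle_ineq)
  also have "\<dots> \<le> L2_set (\<lambda>i. cmod (v $ i)) {..<n} + L2_set (\<lambda>i. cmod (w $ i)) {..<n}"
    by (rule L2_set_triangle_ineq)
  finally show ?thesis unfolding vn_L2 using assms by simp
qed

lemma vn_minus: assumes "v \<in> carrier_vec n" "w \<in> carrier_vec n"
  shows "vec_norm (v - w) \<le> vec_norm v + vec_norm w"
proof -
  have "vec_norm (v - w) = L2_set (\<lambda>i. cmod (v $ i - w $ i)) {..<n}"
    unfolding vn_L2 using assms by (intro L2_set_cong, auto)
  also have "\<dots> \<le> L2_set (\<lambda>i. cmod (v $ i) + cmod (w $ i)) {..<n}"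
    by (rule L2_set_mono, auto simp: norm_triangle_ineq4)
  also have "\<dots> \<le> L2_set (\<lambda>i. cmod (v $ i)) {..<n} + L2_set (\<lambda>i. cmod (w $ i)) {..<n}"
    by (rule L2_set_triangle_ineq)
  finally show ?thesis unfolding vn_L2 using assms by simp
qed

lemma vn_uminus: "vec_norm (- v) = vec_norm v"
  unfolding vn_L2 by (intro L2_set_cong, auto)

lemma crude_bound: assumes M: "M \<in> carrier_mat n n"
  shows "\<exists>K. \<forall>x \<in> carrier_vec n. vec_norm (M *\<^sub>v x) \<le> K * vec_norm x"
proof -
  define R where "R i = (\<Sum>j<n. cmod (M $$ (i,j)))" for i
  have R0: "R i \<ge> 0" for i unfolding R_def by (auto intro: sum_nonneg)
  show ?thesis
  proof (intro exI[of _ "\<Sum>i<n. R i"] ballI)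
    fix x :: "complex vec" assume x: "x \<in> carrier_vec n"
    have ci: "cmod ((M *\<^sub>v x) $ i) \<le> R i * vec_norm x" if i: "i < n" for i
    proof -
      have "(M *\<^sub>v x) $ i = (\<Sum>j<n. M $$ (i,j) * x $ j)"
        using M x i by (auto simp: mult_mat_vec_def scalar_prod_def lessThan_atLeast0 intro!: sum.cong)
      hence "cmod ((M *\<^sub>v x) $ i) \<le> (\<Sum>j<n. cmod (M $$ (i,j)) * cmod (x $ j))"
        by (auto intro!: order.trans[OF norm_sum] simp: norm_mult)
      also have "\<dots> \<le> (\<Sum>j<n. cmod (M $$ (i,j)) * vec_norm x)"
        by (rule sum_mono, rule mult_left_mono, insert x vn_comp[of _ x], auto)
      finally show ?thesis unfolding R_def by (simp add: sum_distrib_right)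
    qed
    have "vec_norm (M *\<^sub>v x) = L2_set (\<lambda>i. cmod ((M *\<^sub>v x) $ i)) {..<n}"
      unfolding vn_L2 using M by simp
    also have "\<dots> \<le> L2_set (\<lambda>i. R i * vec_norm x) {..<n}"
      by (rule L2_set_mono, insert ci, auto)
    also have "\<dots> \<le> (\<Sum>i<n. R i * vec_norm x)"
      by (rule L2_set_le_sum, insert R0 vn_nonneg, auto)
    finally show "vec_norm (M *\<^sub>v x) \<le> (\<Sum>i<n. R i) * vec_norm x" by (simp add: sum_distrib_right)
  qed
qed

lemma opnorm_bound: assumes M: "M \<in> carrier_mat n n" and x: "x \<in> carrier_vec n"
  shows "vec_norm (M *\<^sub>v x) \<le> op_norm M * vec_norm x"
proof (cases "x = 0\<^sub>v n")
  case True
  have "M *\<^sub>v x = 0\<^sub>v n" using M True by auto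
  hence "vec_norm (M *\<^sub>v x) = 0" unfolding vec_norm_def by simp
  moreover have "vec_norm x = 0" using True unfolding vec_norm_def by simp
  ultimately show ?thesis by simp
next
  case False
  let ?S = "{vec_norm (M *\<^sub>v v) | v. v \<in> carrier_vec (dim_col M) \<and> vec_norm v = 1}"
  from crude_bound[OF M] obtain K where K: "\<And>x. x \<in> carrier_vec n \<Longrightarrow> vec_norm (M *\<^sub>v x) \<le> K * vec_norm x" by auto
  have bdd: "bdd_above ?S" unfolding bdd_above_def using M K by force
  have pos: "vec_norm x > 0" using vn_pos[OF x False] .
  define u where "u = complex_of_real (1 / vec_norm x) \<cdot>\<^sub>v x"
  have u: "u \<in> carrier_vec n" "vec_norm u = 1" unfolding u_def vn_smult using x pos
    by (auto simp: norm_divide)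
  have "vec_norm (M *\<^sub>v u) \<in> ?S" using u M by auto
  hence le: "vec_norm (M *\<^sub>v u) \<le> op_norm M" unfolding op_norm_def by (rule cSup_upper[OF _ bdd])
  have "M *\<^sub>v u = complex_of_real (1 / vec_norm x) \<cdot>\<^sub>v (M *\<^sub>v x)" unfolding u_def
    using M x by (simp add: mult_mat_vec)
  hence "vec_norm (M *\<^sub>v u) = cmod (complex_of_real (1 / vec_norm x)) * vec_norm (M *\<^sub>v x)"
    using vn_smult by metis
  also have "\<dots> = vec_norm (M *\<^sub>v x) / vec_norm x" using pos by (simp add: norm_divide)
  finally have "vec_norm (M *\<^sub>v u) = vec_norm (M *\<^sub>v x) / vec_norm x" .
  with le pos show ?thesis by (simp add: divide_le_eq mult.commute)
qed



definition pperm :: "complex mat \<Rightarrow> nat \<Rightarrow> nat set \<Rightarrow> (nat \<Rightarrow> nat) \<Rightarrow> bool" where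
  "pperm P n I f \<longleftrightarrow> P \<in> carrier_mat n n \<and> I \<subseteq> {..<n} \<and> inj_on f I \<and> f ` I \<subseteq> {..<n} \<and>
     (\<forall>i<n. \<forall>j<n. P $$ (i,j) = (if i \<in> I \<and> j = f i then 1 else 0))"

lemma pperm_block: assumes "0 < s \<longrightarrow> a = 0"
  shows "pperm (jordan_block s a ^\<^sub>m k) s {i. i + k < s} (\<lambda>i. i + k)"
proof (cases "s = 0")
  case True
  thus ?thesis unfolding pperm_def by auto
next
  case False
  with assms have a: "a = 0" by auto
  have "(jordan_block s a ^\<^sub>m k) $$ (i,j) = (if i \<in> {i. i + k < s} \<and> j = i + k then 1 else 0)"
    if "i < s" "j < s" for i j
  proof -
    have "(jordan_block s a ^\<^sub>m k) $$ (i,j) = (if i \<le> j then of_nat (k choose (j - i)) * a ^ (k + i - j) else 0)"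
      unfolding jordan_block_pow using that by simp
    also have "\<dots> = (if i \<in> {i. i + k < s} \<and> j = i + k then 1 else 0)"
    proof (cases "i \<le> j")
      case True
      show ?thesis
      proof (cases "j = i + k")
        case True thus ?thesis using that a by auto
      next
        case False
        show ?thesis
        proof (cases "j < i + k")
          case True thus ?thesis using a \<open>i \<le> j\<close> False by auto
        next
          case False2: False
          hence "k < j - i" using False by auto
          thus ?thesis using False by auto
        qed
      qed
    qed auto
    finally show ?thesis .
  qed
  thus ?thesis unfolding pperm_def by (auto simp: inj_on_def)
qed

lemma card_block: "card {i. i + k < (s::nat)} = s - k"
proof -
  have "{i. i + k < s} = {..<s - k}" by auto
  thus ?thesis by simp
qed

lemma pperm_four: assumes 1: "pperm P1 n1 I1 f1" and 2: "pperm P2 n2 I2 f2"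
  shows "pperm (four_block_mat P1 (0\<^sub>m n1 n2) (0\<^sub>m n2 n1) P2) (n1 + n2)
     (I1 \<union> (\<lambda>i. i + n1) ` I2) (\<lambda>i. if i < n1 then f1 i else f2 (i - n1) + n1)"
   and "card (I1 \<union> (\<lambda>i. i + n1) ` I2) = card I1 + card I2"
proof -
  note d1 = 1[unfolded pperm_def] and d2 = 2[unfolded pperm_def]
  let ?f = "\<lambda>i. if i < n1 then f1 i else f2 (i - n1) + n1"
  have inj: "inj_on ?f (I1 \<union> (\<lambda>i. i + n1) ` I2)"
  proof (rule inj_onI)
    fix x y assume x: "x \<in> I1 \<union> (\<lambda>i. i + n1) ` I2" and y: "y \<in> I1 \<union> (\<lambda>i. i + n1) ` I2" and e: "?f x = ?f y"
    show "x = y"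
    proof (cases "x < n1")
      case True
      hence x1: "x \<in> I1" using x by auto
      show ?thesis
      proof (cases "y < n1")
        case True
        hence "y \<in> I1" using y by auto
        thus ?thesis using x1 e \<open>x < n1\<close> True d1 by (auto simp: inj_on_def)
      next
        case False
        hence "?f y \<ge> n1" by auto
        moreover have "?f x < n1" using x1 True d1 by auto
        ultimately show ?thesis using e by auto
      qed
    next
      case False
      then obtain x' where x': "x' \<in> I2" "x = x' + n1" using x d1 by auto
      show ?thesis
      proof (cases "y < n1")
        case True
        hence "y \<in> I1" using y by auto
        hence "?f y < n1" using True d1 by auto
        moreover have "?f x \<ge> n1" using False by auto
        ultimately show ?thesis using e by auto
      next
        case False2: False
        then obtain y' where y': "y' \<in> I2" "y = y' + n1" using y d1 by auto
        thus ?thesis using x' e d2 by (auto simp: inj_on_def)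
      qed
    qed
  qed
  show "pperm (four_block_mat P1 (0\<^sub>m n1 n2) (0\<^sub>m n2 n1) P2) (n1 + n2)
     (I1 \<union> (\<lambda>i. i + n1) ` I2) ?f"
    unfolding pperm_def
  proof (intro conjI allI impI)
    have c: "P1 \<in> carrier_mat n1 n1" "P2 \<in> carrier_mat n2 n2" using d1 d2 by blast+
    show "four_block_mat P1 (0\<^sub>m n1 n2) (0\<^sub>m n2 n1) P2 \<in> carrier_mat (n1 + n2) (n1 + n2)"
      by (rule four_block_carrier_mat[OF c])
    have s1: "I1 \<subseteq> {..<n1}" "f1 ` I1 \<subseteq> {..<n1}" using d1 by blast+
    have s2: "I2 \<subseteq> {..<n2}" "f2 ` I2 \<subseteq> {..<n2}" using d2 by blast+
    show "I1 \<union> (\<lambda>i. i + n1) ` I2 \<subseteq> {..<n1 + n2}" using s1 s2 by auto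
    show "inj_on ?f (I1 \<union> (\<lambda>i. i + n1) ` I2)" by (rule inj)
    show "?f ` (I1 \<union> (\<lambda>i. i + n1) ` I2) \<subseteq> {..<n1 + n2}"
    proof
      fix y assume "y \<in> ?f ` (I1 \<union> (\<lambda>i. i + n1) ` I2)"
      then obtain x where x: "x \<in> I1 \<union> (\<lambda>i. i + n1) ` I2" and y: "y = ?f x" by blast
      show "y \<in> {..<n1 + n2}"
      proof (cases "x \<in> I1")
        case True
        hence "x < n1" "f1 x < n1" using s1 by auto
        thus ?thesis using y by auto
      next
        case False
        then obtain x' where "x' \<in> I2" "x = x' + n1" using x by auto
        hence "f2 x' < n2" "\<not> x < n1" using s2 by auto
        thus ?thesis using y \<open>x = x' + n1\<close> by auto
      qed
    qed
    fix i j assume i: "i < n1 + n2" and j: "j < n1 + n2"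
    show "four_block_mat P1 (0\<^sub>m n1 n2) (0\<^sub>m n2 n1) P2 $$ (i, j) =
      (if i \<in> I1 \<union> (\<lambda>i. i + n1) ` I2 \<and> j = ?f i then 1 else 0)"
    proof -
      have e: "four_block_mat P1 (0\<^sub>m n1 n2) (0\<^sub>m n2 n1) P2 $$ (i, j) = (if i < n1 then
        if j < n1 then P1 $$ (i,j) else 0
        else if j < n1 then 0 else P2 $$ (i - n1, j - n1))"
        using c i j by auto
      show ?thesis
      proof (cases "i < n1")
        case True
        have ni: "i \<notin> (\<lambda>i. i + n1) ` I2" using True by auto
        show ?thesis
        proof (cases "j < n1")
          case True
          thus ?thesis unfolding e using \<open>i < n1\<close> d1 ni by auto
        next
          case False
          have "i \<in> I1 \<Longrightarrow> f1 i < n1" using d1 by auto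
          thus ?thesis unfolding e using \<open>i < n1\<close> ni False by auto
        qed
      next
        case False
        have ni: "i \<notin> I1" using False d1 by auto
        have iff: "i \<in> (\<lambda>i. i + n1) ` I2 \<longleftrightarrow> i - n1 \<in> I2"
        proof
          assume "i - n1 \<in> I2" thus "i \<in> (\<lambda>i. i + n1) ` I2" using False
            by (intro image_eqI[of _ _ "i - n1"], auto)
        qed auto
        show ?thesis
        proof (cases "j < n1")
          case True
          thus ?thesis unfolding e using False ni iff by auto
        next
          case False2: False
          have "P2 $$ (i - n1, j - n1) = (if i - n1 \<in> I2 \<and> j - n1 = f2 (i - n1) then 1 else 0)"
            using d2 i j False False2 by auto
          thus ?thesis unfolding e using False False2 ni iff by auto
        qed
      qed
    qed
  qed
  have "I1 \<inter> (\<lambda>i. i + n1) ` I2 = {}" using d1 by auto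
  moreover have "finite I1" "finite I2" using d1 d2 finite_subset by auto
  ultimately show "card (I1 \<union> (\<lambda>i. i + n1) ` I2) = card I1 + card I2"
    by (subst card_Un_disjoint, auto simp: card_image inj_on_def)
qed

lemma pperm_jordan: assumes "\<forall>(s,a) \<in> set l. 0 < s \<longrightarrow> a = 0"
  shows "\<exists>I f. pperm (jordan_matrix l ^\<^sub>m k) (sum_list (map fst l)) I f \<and>
     card I = sum_list (map (\<lambda>(s,a). s - k) l)"
  using assms
proof (induct l)
  case Nil
  show ?case unfolding jordan_matrix_pow pperm_def by auto
next
  case (Cons sa l)
  obtain s a where sa: "sa = (s,a)" by force
  from Cons obtain I f where IH: "pperm (jordan_matrix l ^\<^sub>m k) (sum_list (map fst l)) I f"
    "card I = sum_list (map (\<lambda>(s,a). s - k) l)" by auto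
  have b: "pperm (jordan_block s a ^\<^sub>m k) s {i. i + k < s} (\<lambda>i. i + k)"
    by (rule pperm_block, insert Cons(2) sa, auto)
  let ?B = "diag_block_mat (map (\<lambda>(n,a). (jordan_block n a) ^\<^sub>m k) l)"
  have B: "?B = jordan_matrix l ^\<^sub>m k" unfolding jordan_matrix_pow ..
  have dB: "dim_row ?B = sum_list (map fst l)" "dim_col ?B = sum_list (map fst l)"
    unfolding B using IH(1) unfolding pperm_def by auto
  have eq: "jordan_matrix (sa # l) ^\<^sub>m k = four_block_mat (jordan_block s a ^\<^sub>m k)
     (0\<^sub>m s (sum_list (map fst l))) (0\<^sub>m (sum_list (map fst l)) s) (jordan_matrix l ^\<^sub>m k)"
    unfolding jordan_matrix_pow sa by (simp add: Let_def dB B[symmetric])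
  show ?case unfolding eq
    using pperm_four[OF b IH(1)] IH(2) card_block[of k s] sa by auto
qed



lemma mv_index: assumes "M \<in> carrier_mat n m" "v \<in> carrier_vec m" "i < n"
  shows "(M *\<^sub>v v) $ i = (\<Sum>j<m. M $$ (i,j) * v $ j)"
  using assms by (auto simp: mult_mat_vec_def scalar_prod_def lessThan_atLeast0 intro!: sum.cong)

lemma pperm_mv: assumes P: "pperm P n I f" and x: "x \<in> carrier_vec n" and i: "i < n"
  shows "(P *\<^sub>v x) $ i = (if i \<in> I then x $ f i else 0)"
proof -
  note d = P[unfolded pperm_def]
  have "(P *\<^sub>v x) $ i = (\<Sum>j<n. P $$ (i,j) * x $ j)" using mv_index[of P n n x i] d x i by auto
  also have "\<dots> = (\<Sum>j<n. if i \<in> I \<and> j = f i then x $ j else 0)"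
    by (rule sum.cong, insert d i, auto)
  also have "\<dots> = (if i \<in> I then x $ f i else 0)"
  proof (cases "i \<in> I")
    case True
    hence "f i < n" using d by auto
    thus ?thesis using True by (simp add: sum.delta')
  qed auto
  finally show ?thesis .
qed

lemma pperm_sq: assumes P: "pperm P n I f" and x: "x \<in> carrier_vec n"
  shows "(\<Sum>i<n. (cmod ((P *\<^sub>v x) $ i))^2) = (\<Sum>j\<in>f ` I. (cmod (x $ j))^2)"
proof -
  note d = P[unfolded pperm_def]
  have "(\<Sum>i<n. (cmod ((P *\<^sub>v x) $ i))^2) = (\<Sum>i<n. if i \<in> I then (cmod (x $ f i))^2 else 0)"
    by (rule sum.cong, auto simp: pperm_mv[OF P x])
  also have "\<dots> = (\<Sum>i\<in>{..<n} \<inter> I. (cmod (x $ f i))^2)" by (simp add: sum.inter_restrict)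
  also have "{..<n} \<inter> I = I" using d by auto
  also have "(\<Sum>i\<in>I. (cmod (x $ f i))^2) = (\<Sum>j\<in>f ` I. (cmod (x $ j))^2)"
    using d by (subst sum.reindex, auto)
  finally show ?thesis .
qed

lemma pperm_le: assumes P: "pperm P n I f" and x: "x \<in> carrier_vec n"
  shows "vec_norm (P *\<^sub>v x) \<le> vec_norm x"
proof -
  note d = P[unfolded pperm_def]
  have "(\<Sum>j\<in>f ` I. (cmod (x $ j))^2) \<le> (\<Sum>j<n. (cmod (x $ j))^2)"
    by (rule sum_mono2, insert d, auto)
  thus ?thesis unfolding vec_norm_def using pperm_sq[OF P x] d x by auto
qed

lemma pperm_eq: assumes P: "pperm P n I f" and x: "x \<in> carrier_vec n"
  and supp: "\<And>j. j < n \<Longrightarrow> j \<notin> f ` I \<Longrightarrow> x $ j = 0"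
  shows "vec_norm (P *\<^sub>v x) = vec_norm x"
proof -
  note d = P[unfolded pperm_def]
  have "(\<Sum>j\<in>f ` I. (cmod (x $ j))^2) = (\<Sum>j<n. (cmod (x $ j))^2)"
    by (rule sum.mono_neutral_left, insert d supp, auto)
  thus ?thesis unfolding vec_norm_def using pperm_sq[OF P x] d x by auto
qed

lemma kern: assumes P: "pperm P n I f" and Q: "pperm Q n I' g" and M: "M \<in> carrier_mat n n"
  and lt: "card I < card I'"
  shows "\<exists>x \<in> carrier_vec n. x \<noteq> 0\<^sub>v n \<and> (\<forall>j<n. j \<notin> g ` I' \<longrightarrow> x $ j = 0) \<and> P *\<^sub>v (M *\<^sub>v x) = 0\<^sub>v n"
proof -
  note d = P[unfolded pperm_def] and e = Q[unfolded pperm_def]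
  define J where "J = g ` I'"
  have J: "J \<subseteq> {..<n}" "card J = card I'" unfolding J_def using e by (auto simp: card_image)
  define Jc where "Jc = {..<n} - J"
  define Ic where "Ic = {..<n} - I"
  have fin: "finite Jc" "finite Ic" "finite I" unfolding Jc_def Ic_def using d finite_subset by auto
  have cJ: "card Jc = n - card I'" unfolding Jc_def using J by (subst card_Diff_subset, auto intro: finite_subset)
  have cI: "card Ic = n - card I" unfolding Ic_def using d by (subst card_Diff_subset, auto intro: finite_subset)
  have "card I' \<le> n" using J card_mono[of "{..<n}" J] by auto
  hence lt2: "card Jc < card Ic" using cJ cI lt by auto
  from card_le_inj[OF fin(1,2)] lt2 obtain \<sigma> where \<sigma>: "\<sigma> ` Jc \<subseteq> Ic" "inj_on \<sigma> Jc" by force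
  have "card (\<sigma> ` Jc) < card Ic" using \<sigma> lt2 by (simp add: card_image)
  hence "\<not> Ic \<subseteq> \<sigma> ` Jc" using card_mono[OF finite_imageI[OF fin(1)]] by (meson leD)
  then obtain i0 where i0: "i0 \<in> Ic" "i0 \<notin> \<sigma> ` Jc" by auto
  have i0n: "i0 < n" "i0 \<notin> I" using i0 unfolding Ic_def by auto
  define PM where "PM = P * M"
  have PM: "PM \<in> carrier_mat n n" unfolding PM_def using d M by auto
  have rowz: "PM $$ (i,j) = 0" if "i < n" "i \<notin> I" "j < n" for i j
  proof -
    have "row P i = 0\<^sub>v n" using d that by (intro eq_vecI, auto)
    hence "PM $$ (i,j) = 0\<^sub>v n \<bullet> col M j" unfolding PM_def using d M that by auto
    also have "\<dots> = 0" using M that by simp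
    finally show ?thesis .
  qed
  define T where "T = mat n n (\<lambda>(i,j). if j \<in> J then PM $$ (i,j) else if i = \<sigma> j then 1 else 0)"
  have T: "T \<in> carrier_mat n n" unfolding T_def by auto
  have "T = mat\<^sub>r n n (\<lambda>i. if i = i0 then 0\<^sub>v n else row T i)"
  proof (rule eq_matI)
    fix i j assume ij: "i < dim_row (mat\<^sub>r n n (\<lambda>i. if i = i0 then 0\<^sub>v n else row T i))"
      "j < dim_col (mat\<^sub>r n n (\<lambda>i. if i = i0 then 0\<^sub>v n else row T i))"
    hence ij: "i < n" "j < n" by auto
    show "T $$ (i, j) = mat\<^sub>r n n (\<lambda>i. if i = i0 then 0\<^sub>v n else row T i) $$ (i, j)"
    proof (cases "i = i0")
      case True
      have "j \<notin> J \<Longrightarrow> j \<in> Jc" unfolding Jc_def using ij by auto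
      hence "j \<notin> J \<Longrightarrow> i0 \<noteq> \<sigma> j" using i0 by auto
      thus ?thesis using True ij rowz[OF i0n(1) i0n(2) ij(2)] unfolding T_def by auto
    qed (insert ij T, auto)
  qed (insert T, auto)
  hence "det T = 0" using det_row_0[OF i0n(1), of "\<lambda>i. row T i"] T by auto
  from this[unfolded det_0_iff_vec_prod_zero[OF T]] obtain v where
    v: "v \<in> carrier_vec n" "v \<noteq> 0\<^sub>v n" "T *\<^sub>v v = 0\<^sub>v n" by auto
  have Tv: "(T *\<^sub>v v) $ i = (\<Sum>j<n. T $$ (i,j) * v $ j)" if "i < n" for i
    using mv_index[OF T v(1) that] .
  have vz: "v $ j0 = 0" if j0: "j0 \<in> Jc" for j0
  proof -
    have j0n: "j0 < n" "j0 \<notin> J" using j0 unfolding Jc_def by auto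
    let ?i = "\<sigma> j0"
    have i: "?i < n" "?i \<notin> I" using \<sigma> j0 unfolding Ic_def by auto
    have "0 = (T *\<^sub>v v) $ ?i" using v i by simp
    also have "\<dots> = (\<Sum>j<n. if j = j0 then v $ j else 0)"
      unfolding Tv[OF i(1)]
    proof (rule sum.cong[OF refl])
      fix j assume j: "j \<in> {..<n}"
      show "T $$ (?i, j) * v $ j = (if j = j0 then v $ j else 0)"
      proof (cases "j \<in> J")
        case True
        thus ?thesis using rowz[OF i, of j] j j0n i unfolding T_def by auto
      next
        case False
        hence "j \<in> Jc" using j unfolding Jc_def by auto
        hence "\<sigma> j0 = \<sigma> j \<longleftrightarrow> j = j0" using \<sigma>(2) j0 unfolding inj_on_def by blast
        thus ?thesis using False j i unfolding T_def by auto
      qed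
    qed
    also have "\<dots> = v $ j0" using j0n by (simp add: sum.delta')
    finally show ?thesis by simp
  qed
  have "PM *\<^sub>v v = T *\<^sub>v v"
  proof (rule eq_vecI)
    fix i assume "i < dim_vec (T *\<^sub>v v)"
    hence i: "i < n" using T by auto
    show "(PM *\<^sub>v v) $ i = (T *\<^sub>v v) $ i"
      unfolding Tv[OF i] mv_index[OF PM v(1) i]
    proof (rule sum.cong[OF refl])
      fix j assume j: "j \<in> {..<n}"
      show "PM $$ (i, j) * v $ j = T $$ (i, j) * v $ j"
      proof (cases "j \<in> J")
        case False
        hence "j \<in> Jc" using j unfolding Jc_def by auto
        thus ?thesis using vz by auto
      qed (insert i j, auto simp: T_def)
    qed
  qed (insert PM T, auto)
  hence "P *\<^sub>v (M *\<^sub>v v) = 0\<^sub>v n" using v d M unfolding PM_def by auto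
  moreover have "\<forall>j<n. j \<notin> g ` I' \<longrightarrow> v $ j = 0" using vz unfolding Jc_def J_def by auto
  ultimately show ?thesis using v by auto
qed



lemma nil_ev: assumes A: "A \<in> carrier_mat n n" and J: "A = jordan_matrix l" and nil: "nilpotent_mat A"
  shows "\<forall>(s,a) \<in> set l. 0 < s \<longrightarrow> a = 0"
proof (rule ccontr)
  assume "\<not> ?thesis"
  then obtain s a where sa: "(s,a) \<in> set l" "0 < s" "a \<noteq> 0" by auto
  have "poly (char_poly A) a = 0" unfolding J jordan_matrix_char_poly poly_prod_list
    using sa by (force simp: prod_list_zero_iff)
  hence "eigenvalue A a" using eigenvalue_root_char_poly[OF A] by simp
  then obtain v where ev: "eigenvector A v a" unfolding eigenvalue_def by auto
  from nil obtain m where m: "A ^\<^sub>m m = 0\<^sub>m n n" unfolding nilpotent_mat_def using A by auto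
  have v: "v \<in> carrier_vec n" "v \<noteq> 0\<^sub>v n" using ev A unfolding eigenvector_def by auto
  have "a ^ m \<cdot>\<^sub>v v = A ^\<^sub>m m *\<^sub>v v" using eigenvector_pow[OF A ev] by simp
  also have "\<dots> = 0\<^sub>v n" unfolding m using v by auto
  finally have "a ^ m \<cdot>\<^sub>v v = 0\<^sub>v n" .
  moreover from v obtain i where i: "i < n" "v $ i \<noteq> 0"
    by (metis eq_vecI carrier_vecD index_zero_vec(1,2))
  ultimately have "a ^ m * v $ i = 0" by (metis index_smult_vec(1) index_zero_vec(1) carrier_vecD v(1))
  thus False using i sa by simp
qed

lemma vec_tele: "a \<in> carrier_vec n \<Longrightarrow> b \<in> carrier_vec n \<Longrightarrow> c \<in> carrier_vec n \<Longrightarrow>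
  (a :: complex vec) - b + (b - c) = a - c"
  by (intro eq_vecI, auto)

lemma tele: assumes A: "A \<in> carrier_mat n n" and B: "B \<in> carrier_mat n n" and C: "C \<in> carrier_mat n n"
  and E: "\<And>x. x \<in> carrier_vec n \<Longrightarrow> vec_norm ((A * C - C * B) *\<^sub>v x) \<le> \<epsilon> * vec_norm x"
  and eps: "\<epsilon> \<ge> 0"
  and Ak: "\<And>y. y \<in> carrier_vec n \<Longrightarrow> vec_norm (A ^\<^sub>m k *\<^sub>v y) \<le> vec_norm y"
  and Bc: "\<And>y. y \<in> carrier_vec n \<Longrightarrow> vec_norm (B *\<^sub>v y) \<le> vec_norm y"
  and IH: "\<And>x. x \<in> carrier_vec n \<Longrightarrow> vec_norm ((A ^\<^sub>m k * C - C * B ^\<^sub>m k) *\<^sub>v x) \<le> real k * \<epsilon> * vec_norm x"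
  and x: "x \<in> carrier_vec n"
  shows "vec_norm ((A ^\<^sub>m Suc k * C - C * B ^\<^sub>m Suc k) *\<^sub>v x) \<le> real (Suc k) * \<epsilon> * vec_norm x"
proof -
  have Ak': "A ^\<^sub>m k \<in> carrier_mat n n" "B ^\<^sub>m k \<in> carrier_mat n n" using A B by auto
  have Cx: "C *\<^sub>v x \<in> carrier_vec n" using mult_mat_vec_carrier[OF C x] .
  have Bx: "B *\<^sub>v x \<in> carrier_vec n" using mult_mat_vec_carrier[OF B x] .
  have ACx: "A *\<^sub>v (C *\<^sub>v x) \<in> carrier_vec n" using mult_mat_vec_carrier[OF A Cx] .
  have CBx: "C *\<^sub>v (B *\<^sub>v x) \<in> carrier_vec n" using mult_mat_vec_carrier[OF C Bx] .
  have BkBx: "B ^\<^sub>m k *\<^sub>v (B *\<^sub>v x) \<in> carrier_vec n" using mult_mat_vec_carrier[OF Ak'(2) Bx] .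
  let ?a = "A ^\<^sub>m k *\<^sub>v (A *\<^sub>v (C *\<^sub>v x))"
  let ?b = "A ^\<^sub>m k *\<^sub>v (C *\<^sub>v (B *\<^sub>v x))"
  let ?c = "C *\<^sub>v (B ^\<^sub>m k *\<^sub>v (B *\<^sub>v x))"
  have ca: "?a \<in> carrier_vec n" "?b \<in> carrier_vec n" "?c \<in> carrier_vec n"
    using mult_mat_vec_carrier[OF Ak'(1) ACx] mult_mat_vec_carrier[OF Ak'(1) CBx] mult_mat_vec_carrier[OF C BkBx] .
  have AkA: "A ^\<^sub>m k * A \<in> carrier_mat n n" using mult_carrier_mat[OF Ak'(1) A] .
  have BkB: "B ^\<^sub>m k * B \<in> carrier_mat n n" using mult_carrier_mat[OF Ak'(2) B] .
  have X: "A ^\<^sub>m k * A * C \<in> carrier_mat n n" "C * (B ^\<^sub>m k * B) \<in> carrier_mat n n"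
    using mult_carrier_mat[OF AkA C] mult_carrier_mat[OF C BkB] .
  have "(A ^\<^sub>m Suc k * C - C * B ^\<^sub>m Suc k) *\<^sub>v x = (A ^\<^sub>m k * A * C) *\<^sub>v x - (C * (B ^\<^sub>m k * B)) *\<^sub>v x"
    using minus_mult_distrib_mat_vec[OF X x] by simp
  also have "(A ^\<^sub>m k * A * C) *\<^sub>v x = ?a"
    unfolding assoc_mult_mat_vec[OF AkA C x] assoc_mult_mat_vec[OF Ak'(1) A Cx] ..
  also have "(C * (B ^\<^sub>m k * B)) *\<^sub>v x = ?c"
    unfolding assoc_mult_mat_vec[OF C BkB x] assoc_mult_mat_vec[OF Ak'(2) B x] ..
  finally have "(A ^\<^sub>m Suc k * C - C * B ^\<^sub>m Suc k) *\<^sub>v x = ?a - ?c" .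
  also have "\<dots> = (?a - ?b) + (?b - ?c)" using vec_tele[OF ca] by simp
  also have "?a - ?b = A ^\<^sub>m k *\<^sub>v ((A * C - C * B) *\<^sub>v x)"
  proof -
    have AC: "A * C \<in> carrier_mat n n" "C * B \<in> carrier_mat n n" using mult_carrier_mat[OF A C] mult_carrier_mat[OF C B] .
    have "(A * C - C * B) *\<^sub>v x = A *\<^sub>v (C *\<^sub>v x) - C *\<^sub>v (B *\<^sub>v x)"
      unfolding minus_mult_distrib_mat_vec[OF AC x] assoc_mult_mat_vec[OF A C x] assoc_mult_mat_vec[OF C B x] ..
    thus ?thesis using mult_minus_distrib_mat_vec[OF Ak'(1) ACx CBx] by simp
  qed
  also have "?b - ?c = (A ^\<^sub>m k * C - C * B ^\<^sub>m k) *\<^sub>v (B *\<^sub>v x)"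
  proof -
    have AC: "A ^\<^sub>m k * C \<in> carrier_mat n n" "C * B ^\<^sub>m k \<in> carrier_mat n n"
      using mult_carrier_mat[OF Ak'(1) C] mult_carrier_mat[OF C Ak'(2)] .
    show ?thesis
      unfolding minus_mult_distrib_mat_vec[OF AC Bx] assoc_mult_mat_vec[OF Ak'(1) C Bx] assoc_mult_mat_vec[OF C Ak'(2) Bx] ..
  qed
  finally have eq: "(A ^\<^sub>m Suc k * C - C * B ^\<^sub>m Suc k) *\<^sub>v x =
     A ^\<^sub>m k *\<^sub>v ((A * C - C * B) *\<^sub>v x) + (A ^\<^sub>m k * C - C * B ^\<^sub>m k) *\<^sub>v (B *\<^sub>v x)" .
  have c1: "(A * C - C * B) *\<^sub>v x \<in> carrier_vec n"
    by (rule mult_mat_vec_carrier[OF _ x], rule minus_carrier_mat, insert A B C, auto)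
  have c2: "B *\<^sub>v x \<in> carrier_vec n" using B x by auto
  have "vec_norm ((A ^\<^sub>m Suc k * C - C * B ^\<^sub>m Suc k) *\<^sub>v x) \<le>
     vec_norm (A ^\<^sub>m k *\<^sub>v ((A * C - C * B) *\<^sub>v x)) + vec_norm ((A ^\<^sub>m k * C - C * B ^\<^sub>m k) *\<^sub>v (B *\<^sub>v x))"
    unfolding eq
  proof (rule vn_add[of _ n])
    show "A ^\<^sub>m k *\<^sub>v ((A * C - C * B) *\<^sub>v x) \<in> carrier_vec n" by (rule mult_mat_vec_carrier[OF Ak'(1) c1])
    show "(A ^\<^sub>m k * C - C * B ^\<^sub>m k) *\<^sub>v (B *\<^sub>v x) \<in> carrier_vec n"
      by (rule mult_mat_vec_carrier[OF _ c2], rule minus_carrier_mat, insert Ak' C, auto)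
  qed
  also have "\<dots> \<le> \<epsilon> * vec_norm x + real k * \<epsilon> * vec_norm x"
  proof (rule add_mono)
    show "vec_norm (A ^\<^sub>m k *\<^sub>v ((A * C - C * B) *\<^sub>v x)) \<le> \<epsilon> * vec_norm x"
      using Ak[OF c1] E[OF x] by linarith
    have "vec_norm ((A ^\<^sub>m k * C - C * B ^\<^sub>m k) *\<^sub>v (B *\<^sub>v x)) \<le> real k * \<epsilon> * vec_norm (B *\<^sub>v x)"
      by (rule IH[OF c2])
    also have "\<dots> \<le> real k * \<epsilon> * vec_norm x"
      by (rule mult_left_mono[OF Bc[OF x]], insert eps, auto)
    finally show "vec_norm ((A ^\<^sub>m k * C - C * B ^\<^sub>m k) *\<^sub>v (B *\<^sub>v x)) \<le> real k * \<epsilon> * vec_norm x" .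
  qed
  also have "\<dots> = real (Suc k) * \<epsilon> * vec_norm x" by (simp add: algebra_simps)
  finally show ?thesis .
qed

lemma R_big: "sum_list (map fst l) \<le> k \<Longrightarrow> sum_list (map (\<lambda>(s,a). s - k) (l :: (nat \<times> complex) list)) = 0"
  by (induct l, auto)

lemma R_count: assumes "k \<ge> 1"
  shows "int (num_blocks l k) = int (sum_list (map (\<lambda>(s,a). s - (k - 1)) l))
     - 2 * int (sum_list (map (\<lambda>(s,a). s - k) l)) + int (sum_list (map (\<lambda>(s,a). s - (k + 1)) l))"
proof (induct l)
  case Nil
  then show ?case by (simp add: num_blocks_def)
next
  case (Cons sa l)
  obtain s a where sa: "sa = (s,a)" by force
  have "num_blocks (sa # l) k = (if s = k then 1 else 0) + num_blocks l k"
    unfolding num_blocks_def sa by auto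
  moreover have "int (if s = k then 1 else 0) = int (s - (k - 1)) - 2 * int (s - k) + int (s - (k + 1))"
    using assms by auto
  ultimately show ?case using Cons unfolding sa by simp
qed



lemma vn_zero[simp]: "vec_norm (0\<^sub>v n) = 0" unfolding vec_norm_def by simp

lemma vn_0minus: "w \<in> carrier_vec n \<Longrightarrow> vec_norm (0\<^sub>v n - w) = vec_norm w"
proof -
  assume w: "w \<in> carrier_vec n"
  have "0\<^sub>v n - w = - w" using w by (intro eq_vecI, auto)
  thus ?thesis using vn_uminus by simp
qed

lemma minus0: "w \<in> carrier_vec n \<Longrightarrow> (w :: complex vec) - 0\<^sub>v n = w"
  by (intro eq_vecI, auto)

theorem proposition11:
  fixes n :: nat and A B :: "complex mat" and n_as m_as :: "(nat \<times> complex) list"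
    and \<xi> \<epsilon> :: real
  assumes "A \<in> carrier_mat n n" and "B \<in> carrier_mat n n"
    and "A = jordan_matrix n_as" and "B = jordan_matrix m_as"
    and "nilpotent_mat A" and "nilpotent_mat B"
    and "\<xi> > 0"
    and "C \<in> carrier_mat n n" and "Ci \<in> carrier_mat n n"
    and "C * Ci = 1\<^sub>m n" and "Ci * C = 1\<^sub>m n"
    and "op_norm C \<le> \<xi>" and "op_norm Ci \<le> \<xi>"
    and "op_norm (A * C - C * B) = \<epsilon>"
    and "\<epsilon> < 1 / (real n * fact n * \<xi> ^ n)"
  shows "\<forall>k \<ge> 1. num_blocks n_as k = num_blocks m_as k"
proof -
  note A = assms(1) and B = assms(2) and JA = assms(3) and JB = assms(4)
  note C = assms(8) and Ci = assms(9) and CCi = assms(10) and CiC = assms(11)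
  have nA: "n = sum_list (map fst n_as)" using A unfolding JA by auto
  have nB: "n = sum_list (map fst m_as)" using B unfolding JB by auto
  show ?thesis
  proof (cases "n = 0")
    case True
    have "\<forall>s \<in> set (map fst n_as). s = 0" "\<forall>s \<in> set (map fst m_as). s = 0"
      using nA nB True sum_list_eq_0_iff by metis+
    hence "num_blocks n_as k = 0" "num_blocks m_as k = 0" if "k \<ge> 1" for k
      using that unfolding num_blocks_def by (auto simp: filter_empty_conv)
    thus ?thesis by auto
  next
    case False
    hence n0: "0 < n" by auto
    define RA where "RA k = sum_list (map (\<lambda>(s,a). s - k) n_as)" for k
    define RB where "RB k = sum_list (map (\<lambda>(s,a). s - k) m_as)" for k
    have evA: "\<forall>(s,a) \<in> set n_as. 0 < s \<longrightarrow> a = 0" by (rule nil_ev[OF A JA assms(5)])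
    have evB: "\<forall>(s,a) \<in> set m_as. 0 < s \<longrightarrow> a = 0" by (rule nil_ev[OF B JB assms(6)])
    have pA: "\<exists>I f. pperm (A ^\<^sub>m k) n I f \<and> card I = RA k" for k
      using pperm_jordan[OF evA, of k] unfolding RA_def JA nA[symmetric] .
    have pB: "\<exists>I f. pperm (B ^\<^sub>m k) n I f \<and> card I = RB k" for k
      using pperm_jordan[OF evB, of k] unfolding RB_def JB nB[symmetric] .
    have Akc: "vec_norm (A ^\<^sub>m k *\<^sub>v y) \<le> vec_norm y" if "y \<in> carrier_vec n" for k y
      using pA[of k] pperm_le that by blast
    have Bkc: "vec_norm (B ^\<^sub>m k *\<^sub>v y) \<le> vec_norm y" if "y \<in> carrier_vec n" for k y
      using pB[of k] pperm_le that by blast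
    have B1: "B ^\<^sub>m 1 = B" using B by simp
    have Bc: "vec_norm (B *\<^sub>v y) \<le> vec_norm y" if "y \<in> carrier_vec n" for y
      using Bkc[OF that, of 1] unfolding B1 .
    have E: "A * C - C * B \<in> carrier_mat n n" using A B C by auto
    have hE: "vec_norm ((A * C - C * B) *\<^sub>v x) \<le> \<epsilon> * vec_norm x" if "x \<in> carrier_vec n" for x
      using opnorm_bound[OF E that] assms(14) by simp
    have hC: "vec_norm (C *\<^sub>v x) \<le> \<xi> * vec_norm x" if "x \<in> carrier_vec n" for x
      using opnorm_bound[OF C that] mult_right_mono[OF assms(12) vn_nonneg[of x]] by linarith
    have hCi: "vec_norm (Ci *\<^sub>v x) \<le> \<xi> * vec_norm x" if "x \<in> carrier_vec n" for x
      using opnorm_bound[OF Ci that] mult_right_mono[OF assms(13) vn_nonneg[of x]] by linarith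
    have CiCx: "Ci *\<^sub>v (C *\<^sub>v x) = x" if "x \<in> carrier_vec n" for x
      using assoc_mult_mat_vec[OF Ci C that, symmetric] CiC that by simp
    have CCix: "C *\<^sub>v (Ci *\<^sub>v x) = x" if "x \<in> carrier_vec n" for x
      using assoc_mult_mat_vec[OF C Ci that, symmetric] CCi that by simp
    define ov where "ov = (vec n (\<lambda>_. 1) :: complex vec)"
    have ovc: "ov \<in> carrier_vec n" "ov \<noteq> 0\<^sub>v n" unfolding ov_def using n0
      by (auto simp: vec_eq_iff)
    have opos: "vec_norm ov > 0" using vn_pos[OF ovc] .
    have eps: "\<epsilon> \<ge> 0"
    proof -
      have "0 \<le> \<epsilon> * vec_norm ov" using hE[OF ovc(1)] vn_nonneg order_trans by blast
      thus ?thesis using opos by (simp add: zero_le_mult_iff)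
    qed
    have xi: "\<xi> \<ge> 1"
    proof (rule ccontr)
      assume "\<not> \<xi> \<ge> 1"
      hence lt: "\<xi> * \<xi> < 1" using assms(7) by (metis less_eq_real_def mult_less_cancel_right2 not_le order.strict_trans)
      have Cio: "Ci *\<^sub>v ov \<in> carrier_vec n" using Ci ovc by auto
      have "vec_norm ov = vec_norm (C *\<^sub>v (Ci *\<^sub>v ov))" using CCix[OF ovc(1)] by simp
      also have "\<dots> \<le> \<xi> * vec_norm (Ci *\<^sub>v ov)" by (rule hC[OF Cio])
      also have "\<dots> \<le> \<xi> * (\<xi> * vec_norm ov)" by (rule mult_left_mono[OF hCi[OF ovc(1)]], insert assms(7), auto)
      also have "\<dots> < vec_norm ov" using lt opos by (simp add: mult.assoc[symmetric])
      finally show False by simp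
    qed
    have keps: "real k * \<epsilon> * \<xi> < 1" if "k < n" for k
    proof -
      have pos: "real n * fact n * \<xi> ^ n > 0" using n0 assms(7) by auto
      have "\<epsilon> * (real n * fact n * \<xi> ^ n) < 1" using assms(15) pos by (simp add: less_divide_eq)
      moreover have "real k * \<epsilon> * \<xi> \<le> \<epsilon> * (real n * fact n * \<xi> ^ n)"
      proof -
        have "\<xi> \<le> \<xi> ^ n" using xi n0 by (metis One_nat_def Suc_leI power_increasing power_one_right)
        moreover have "1 \<le> (fact n :: real)" by simp
        ultimately have "\<xi> \<le> fact n * \<xi> ^ n" using xi
          by (metis dual_order.trans mult_le_cancel_right1 order.trans zero_le_one le_numeral_extra(1) mult_right_mono_neg not_le less_le_trans zero_less_one)
        hence "real k * \<xi> \<le> real n * (fact n * \<xi> ^ n)"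
          using that xi by (intro mult_mono, auto)
        hence "\<epsilon> * (real k * \<xi>) \<le> \<epsilon> * (real n * (fact n * \<xi> ^ n))" using eps by (rule mult_left_mono)
        thus ?thesis by (simp add: algebra_simps)
      qed
      ultimately show ?thesis by linarith
    qed
    have Dk: "vec_norm ((A ^\<^sub>m k * C - C * B ^\<^sub>m k) *\<^sub>v x) \<le> real k * \<epsilon> * vec_norm x"
      if "x \<in> carrier_vec n" for k x
      using that
    proof (induct k arbitrary: x)
      case 0
      have "A ^\<^sub>m 0 * C - C * B ^\<^sub>m 0 = 0\<^sub>m n n" using A B C by (intro eq_matI, auto)
      moreover have "0\<^sub>m n n *\<^sub>v x = 0\<^sub>v n" using 0 by (intro eq_vecI, auto simp: scalar_prod_def)
      ultimately show ?case by simp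
    next
      case (Suc k)
      show ?case by (rule tele[OF A B C hE eps Akc Bc Suc(1) Suc(2)])
    qed
    have eqk: "RA k = RB k" if k: "k < n" for k
    proof -
      obtain IA fA where IA: "pperm (A ^\<^sub>m k) n IA fA" "card IA = RA k" using pA by blast
      obtain IB gB where IB: "pperm (B ^\<^sub>m k) n IB gB" "card IB = RB k" using pB by blast
      have Ak: "A ^\<^sub>m k \<in> carrier_mat n n" "B ^\<^sub>m k \<in> carrier_mat n n" using A B by auto
      have Dc: "A ^\<^sub>m k * C \<in> carrier_mat n n" "C * B ^\<^sub>m k \<in> carrier_mat n n" using Ak C by auto
      have Deq: "(A ^\<^sub>m k * C - C * B ^\<^sub>m k) *\<^sub>v x = A ^\<^sub>m k *\<^sub>v (C *\<^sub>v x) - C *\<^sub>v (B ^\<^sub>m k *\<^sub>v x)"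
        if "x \<in> carrier_vec n" for x
        unfolding minus_mult_distrib_mat_vec[OF Dc that] assoc_mult_mat_vec[OF Ak(1) C that]
          assoc_mult_mat_vec[OF C Ak(2) that] ..
      have "\<not> RA k < RB k"
      proof
        assume "RA k < RB k"
        from kern[OF IA(1) IB(1) C] this IA IB obtain x where
          x: "x \<in> carrier_vec n" "x \<noteq> 0\<^sub>v n" "\<forall>j<n. j \<notin> gB ` IB \<longrightarrow> x $ j = 0"
          "A ^\<^sub>m k *\<^sub>v (C *\<^sub>v x) = 0\<^sub>v n" by auto
        have Bx: "B ^\<^sub>m k *\<^sub>v x \<in> carrier_vec n" using Ak x by auto
        have CBx: "C *\<^sub>v (B ^\<^sub>m k *\<^sub>v x) \<in> carrier_vec n" using C Bx by auto
        have "vec_norm x = vec_norm (B ^\<^sub>m k *\<^sub>v x)" using pperm_eq[OF IB(1) x(1)] x(3) by auto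
        also have "\<dots> = vec_norm (Ci *\<^sub>v (C *\<^sub>v (B ^\<^sub>m k *\<^sub>v x)))" using CiCx[OF Bx] by simp
        also have "\<dots> \<le> \<xi> * vec_norm (C *\<^sub>v (B ^\<^sub>m k *\<^sub>v x))" by (rule hCi[OF CBx])
        also have "vec_norm (C *\<^sub>v (B ^\<^sub>m k *\<^sub>v x)) = vec_norm ((A ^\<^sub>m k * C - C * B ^\<^sub>m k) *\<^sub>v x)"
          unfolding Deq[OF x(1)] x(4) vn_0minus[OF CBx] ..
        also have "\<xi> * \<dots> \<le> \<xi> * (real k * \<epsilon> * vec_norm x)"
          by (rule mult_left_mono[OF Dk[OF x(1)]], insert assms(7), auto)
        also have "\<dots> = (real k * \<epsilon> * \<xi>) * vec_norm x" by simp
        also have "\<dots> < vec_norm x" using keps[OF k] vn_pos[OF x(1,2)] by simp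
        finally show False by simp
      qed
      moreover have "\<not> RB k < RA k"
      proof
        assume "RB k < RA k"
        from kern[OF IB(1) IA(1) Ci] this IA IB obtain y where
          y: "y \<in> carrier_vec n" "y \<noteq> 0\<^sub>v n" "\<forall>j<n. j \<notin> fA ` IA \<longrightarrow> y $ j = 0"
          "B ^\<^sub>m k *\<^sub>v (Ci *\<^sub>v y) = 0\<^sub>v n" by auto
        define x where "x = Ci *\<^sub>v y"
        have x: "x \<in> carrier_vec n" unfolding x_def using Ci y by auto
        have Ay: "A ^\<^sub>m k *\<^sub>v y \<in> carrier_vec n" using Ak y by auto
        have "vec_norm y = vec_norm (A ^\<^sub>m k *\<^sub>v y)" using pperm_eq[OF IA(1) y(1)] y(3) by auto
        also have "A ^\<^sub>m k *\<^sub>v y = (A ^\<^sub>m k * C - C * B ^\<^sub>m k) *\<^sub>v x"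
          unfolding Deq[OF x] unfolding x_def CCix[OF y(1)] y(4)
        proof -
          have "C *\<^sub>v 0\<^sub>v n = 0\<^sub>v n" using C by (intro eq_vecI, auto simp: scalar_prod_def)
          thus "A ^\<^sub>m k *\<^sub>v y = A ^\<^sub>m k *\<^sub>v y - C *\<^sub>v 0\<^sub>v n" using minus0[OF Ay] by simp
        qed
        also have "vec_norm \<dots> \<le> real k * \<epsilon> * vec_norm x" by (rule Dk[OF x])
        also have "\<dots> \<le> real k * \<epsilon> * (\<xi> * vec_norm y)" unfolding x_def
          by (rule mult_left_mono[OF hCi[OF y(1)]], insert eps, auto)
        also have "\<dots> = (real k * \<epsilon> * \<xi>) * vec_norm y" by simp
        also have "\<dots> < vec_norm y" using keps[OF k] vn_pos[OF y(1,2)] by simp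
        finally show False by simp
      qed
      ultimately show ?thesis by simp
    qed
    have eq: "RA k = RB k" for k
    proof (cases "k < n")
      case False
      hence "sum_list (map fst n_as) \<le> k" "sum_list (map fst m_as) \<le> k" using nA nB by auto
      hence "RA k = 0" "RB k = 0" unfolding RA_def RB_def using R_big by blast+
      thus ?thesis by simp
    qed (rule eqk)
    show ?thesis
    proof (intro allI impI)
      fix k :: nat assume k: "k \<ge> 1"
      have "int (num_blocks n_as k) = int (num_blocks m_as k)"
        unfolding R_count[OF k] using eq[unfolded RA_def RB_def] by metis
      thus "num_blocks n_as k = num_blocks m_as k" by simp
    qed
  qed
qed


end
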